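(* Let $L\ge2$, let $\boldsymbol\gamma\in\mathbb R^L$, and let $\Omega$ be a symmetric positive definite $L\times L$ matrix such that $\lambda^{EGMM}_k>0$ for all $k$, where $\lambda^{EGMM}_k=\gamma_k[\Omega^{-1}\boldsymbol\gamma]_k/(\boldsymbol\gamma'\Omega^{-1}\boldsymbol\gamma)$. Then for each $\ell$, viewing $\lambda^{EGMM}_\ell$ as a function of the diagonal entry $[\Omega]_{\ell\ell}$ with all other entries of $\Omega$ held fixed, $$\frac{\partial\lambda^{EGMM}_\ell}{\partial[\Omega]_{\ell\ell}}<0.$$
   Context: In the paper, $\boldsymbol\gamma=(\mathrm{Cov}(D_i,Z_{1i}),\dots,\mathrm{Cov}(D_i,Z_{Li}))'$ are first-stage covariances of a binary treatment with $L$ binary instruments and $\Omega$ is the second moment matrix of the IV moment vector; $\lambda^{EGMM}$ are the implied efficient-GMM weights on the instrument-specific Wald estimands. The result is motivated by the premise that increasing within-complier treatment-effect variance for instrument $\ell$ increases $[\Omega]_{\ell\ell}$ while leaving other entries unchanged. *)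

theory Defs
  imports "HOL-Analysis.Analysis"
begin

definition sym_posdef :: "real ^'n ^'n \<Rightarrow> bool" where
  "sym_posdef A \<longleftrightarrow> transpose A = A \<and> (\<forall>x. x \<noteq> 0 \<longrightarrow> x \<bullet> (A *v x) > 0)"

definition lambda_egmm :: "real ^'n ^'n \<Rightarrow> real ^'n \<Rightarrow> 'n \<Rightarrow> real" where
  "lambda_egmm Omega gamma k =
     gamma $ k * (matrix_inv Omega *v gamma) $ k / (gamma \<bullet> (matrix_inv Omega *v gamma))"

definition diag_upd :: "real ^'n ^'n \<Rightarrow> 'n \<Rightarrow> real \<Rightarrow> real ^'n ^'n" where
  "diag_upd Omega l t = (\<chi> i j. if i = l \<and> j = l then t else Omega $ i $ j)"

end

theory Submission
  imports Defs
begin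

lemma deriv_aux:
  fixes q K t0 a bl :: real
  assumes "q > 0"
  shows "((\<lambda>t. K / (q * (1 + (t - t0) * a) - (t - t0) * bl ^ 2)) has_real_derivative
  - K * (q * a - bl ^ 2) / q ^ 2) (at t0)"
  apply (rule derivative_eq_intros refl)+
  using assms apply (auto simp: power2_eq_square field_simps)
  done

lemma inv_right:
  fixes M :: "real ^'n ^'n"
  assumes "invertible M"
  shows "M ** matrix_inv M = mat 1 \<and> matrix_inv M ** M = mat 1"
  using assms unfolding invertible_def matrix_inv_def by (rule someI_ex)

lemma sym_inner:
  fixes M :: "real ^'n ^'n"
  assumes "transpose M = M"
  shows "x \<bullet> (M *v y) = (M *v x) \<bullet> y"
proof -
  have "x \<bullet> (M *v y) = (x v* M) \<bullet> y" by (simp add: dot_lmul_matrix)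
  also have "x v* M = transpose M *v x" by simp
  finally show ?thesis using assms by simp
qed

lemma diag_upd_mult:
  fixes M :: "real ^'n ^'n"
  shows "diag_upd M l t *v x = M *v x + ((t - M $ l $ l) * x $ l) *\<^sub>R axis l 1"
proof -
  have "(diag_upd M l t *v x) $ i = (M *v x + ((t - M $ l $ l) * x $ l) *\<^sub>R axis l 1) $ i" for i
  proof -
    have e: "(diag_upd M l t) $ i $ j * x $ j = M $ i $ j * x $ j +
        (if j = l then (if i = l then (t - M $ l $ l) * x $ l else 0) else 0)" for j
      by (auto simp: diag_upd_def algebra_simps)
    show ?thesis
      unfolding matrix_vector_mult_def
      by (simp add: e sum.distrib axis_def)
  qed
  then show ?thesis by (simp add: vec_eq_iff)
qed

lemma posdef_inj:
  fixes M :: "real ^'n ^'n"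
  assumes "sym_posdef M" "M *v y = M *v z"
  shows "y = z"
proof (rule ccontr)
  assume "y \<noteq> z"
  then have "(y - z) \<bullet> (M *v (y - z)) > 0" using assms(1) unfolding sym_posdef_def by auto
  moreover have "M *v (y - z) = 0" using assms(2) by (simp add: matrix_vector_mult_diff_distrib)
  ultimately show False by simp
qed

theorem proposition18:
  fixes Omega :: "real ^'n ^'n" and gamma :: "real ^'n" and l :: 'n
  assumes "CARD('n) \<ge> 2"
    and "sym_posdef Omega"
    and "\<forall>k. lambda_egmm Omega gamma k > 0"
  shows "\<exists>D. ((\<lambda>t. lambda_egmm (diag_upd Omega l t) gamma l)
              has_real_derivative D) (at (Omega $ l $ l)) \<and> D < 0"
proof -
  have symm: "transpose Omega = Omega" using assms(2) unfolding sym_posdef_def by auto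
  have pd: "\<And>x. x \<noteq> 0 \<Longrightarrow> x \<bullet> (Omega *v x) > 0" using assms(2) unfolding sym_posdef_def by auto
  have psd: "x \<bullet> (Omega *v x) \<ge> 0" for x using pd[of x] by (cases "x = 0") auto
  have invO: "invertible Omega"
    unfolding invertible_left_inverse matrix_left_invertible_ker
    using posdef_inj[OF assms(2), of _ 0] by simp
  define A where "A = matrix_inv Omega"
  have OA: "Omega *v (A *v x) = x" for x
    using inv_right[OF invO] by (simp add: A_def matrix_vector_mul_assoc)
  define e :: "real ^'n" where "e = axis l 1"
  define b where "b = A *v gamma"
  define u where "u = A *v e"
  have Ob: "Omega *v b = gamma" by (simp add: b_def OA)
  have Ou: "Omega *v u = e" by (simp add: u_def OA)
  define q where "q = gamma \<bullet> b"
  define a where "a = u $ l"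
  define bl where "bl = b $ l"
  have ea: "e \<bullet> x = x $ l" for x by (simp add: e_def inner_axis')
  have q_eq: "q = b \<bullet> (Omega *v b)" using Ob by (simp add: q_def inner_commute)
  have a_eq: "a = u \<bullet> (Omega *v u)" unfolding Ou by (metis a_def ea inner_commute)
  have bl_eq: "bl = u \<bullet> (Omega *v b)"
    using sym_inner[OF symm, of u b] Ou ea by (simp add: bl_def inner_commute)
  have gu: "gamma \<bullet> u = bl"
    using sym_inner[OF symm, of b u] Ob Ou ea by (simp add: bl_def inner_commute)
  have lam: "lambda_egmm Omega gamma k = gamma $ k * b $ k / q" for k
    by (simp add: lambda_egmm_def A_def b_def q_def)
  have "lambda_egmm Omega gamma l > 0" using assms(3) by auto
  then have pos1: "gamma $ l * bl / q > 0" by (simp add: lam bl_def)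
  have qpos: "q > 0" using pos1 psd[of b] q_eq
    by (metis divide_eq_0_iff less_eq_real_def linorder_not_le not_less_iff_gr_or_eq zero_less_divide_iff)
  have Kpos: "gamma $ l * bl > 0" using pos1 qpos by (simp add: zero_less_divide_iff)
  have enz: "e \<noteq> 0" by (simp add: e_def)
  have unz: "u \<noteq> 0" using Ou enz by auto
  have apos: "a > 0" using pd[OF unz] a_eq by simp
  (* strict Cauchy-Schwarz *)
  have CS: "q * a - bl ^ 2 > 0"
  proof -
    define v where "v = a *\<^sub>R b - bl *\<^sub>R u"
    have symub: "b \<bullet> (Omega *v u) = bl" using bl_eq sym_inner[OF symm, of u b] by (simp add: inner_commute)
    have vv: "v \<bullet> (Omega *v v) = a * (q * a - bl ^ 2)"
      unfolding v_def
      by (simp add: matrix_vector_mult_diff_distrib matrix_vector_mult_scaleR inner_diff_left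
          inner_diff_right q_eq[symmetric] a_eq[symmetric] bl_eq[symmetric] symub power2_eq_square
          algebra_simps)
    have "v \<noteq> 0"
    proof
      assume v0: "v = 0"
      have "Omega *v v = a *\<^sub>R gamma - bl *\<^sub>R e"
        unfolding v_def by (simp add: matrix_vector_mult_diff_distrib matrix_vector_mult_scaleR Ob Ou)
      then have ge: "a *\<^sub>R gamma = bl *\<^sub>R e" using v0 by simp
      obtain k where "k \<noteq> l"
      proof -
        have "\<not> (UNIV :: 'n set) \<subseteq> {l}"
        proof
          assume "(UNIV :: 'n set) \<subseteq> {l}"
          then have "CARD('n) \<le> card {l}" by (meson card_mono finite.emptyI finite.insertI)
          then show False using assms(1) by simp
        qed
        then show ?thesis using that by auto
      qed
      moreover have "(a *\<^sub>R gamma) $ k = (bl *\<^sub>R e) $ k" using ge by simp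
      ultimately have "a * gamma $ k = 0" by (simp add: e_def axis_def)
      then have "gamma $ k = 0" using apos by simp
      then have "lambda_egmm Omega gamma k = 0" by (simp add: lam)
      then show False using assms(3) by (metis less_irrefl)
    qed
    then have "v \<bullet> (Omega *v v) > 0" by (rule pd)
    then show ?thesis using vv apos by (simp add: zero_less_mult_iff)
  qed
  define t0 where "t0 = Omega $ l $ l"
  define g where "g = (\<lambda>t. gamma $ l * bl / (q * (1 + (t - t0) * a) - (t - t0) * bl ^ 2))"
  define S where "S = {t. \<bar>t - t0\<bar> < 1 / a}"
  have Sopen: "open S" unfolding S_def by (intro open_Collect_less continuous_intros)
  have t0S: "t0 \<in> S" using apos by (simp add: S_def)
  have eq: "g t = lambda_egmm (diag_upd Omega l t) gamma l" if "t \<in> S" for t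
  proof -
    define s where "s = t - t0"
    have "\<bar>s\<bar> * a < 1" using that apos by (simp add: S_def s_def field_simps)
    moreover have "(- s) * a \<le> \<bar>s\<bar> * a" using apos by (intro mult_right_mono) auto
    ultimately have den: "1 + s * a > 0" by linarith
    define c where "c = s / (1 + s * a)"
    have c1: "c * (1 + s * a) = s" using den by (simp add: c_def)
    define w where "w = b - (c * bl) *\<^sub>R u"
    have wl: "w $ l = bl - c * bl * a" by (simp add: w_def a_def bl_def)
    have Mw: "diag_upd Omega l t *v w = gamma"
    proof -
      have "diag_upd Omega l t *v w = gamma - (c * bl) *\<^sub>R e + (s * (bl - c * bl * a)) *\<^sub>R e"
        unfolding diag_upd_mult wl
        by (simp add: w_def matrix_vector_mult_diff_distrib matrix_vector_mult_scaleR Ob Ou s_def t0_def e_def)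
      also have "\<dots> = gamma + (bl * (s - c * (1 + s * a))) *\<^sub>R e"
        by (simp add: algebra_simps)
      finally show ?thesis using c1 by simp
    qed
    have injM: "diag_upd Omega l t *v x = 0 \<Longrightarrow> x = 0" for x
    proof -
      assume h: "diag_upd Omega l t *v x = 0"
      have r: "Omega *v ((- (s * x $ l)) *\<^sub>R u) = (- (s * x $ l)) *\<^sub>R e"
        by (simp only: matrix_vector_mult_scaleR Ou)
      have "Omega *v x + (s * x $ l) *\<^sub>R e = 0"
        using h unfolding diag_upd_mult by (simp add: s_def t0_def e_def)
      then have "Omega *v x = (- (s * x $ l)) *\<^sub>R e"
        by (simp add: eq_neg_iff_add_eq_0)
      then have "Omega *v x = Omega *v ((- (s * x $ l)) *\<^sub>R u)" using r by simp
      then have xe: "x = (- (s * x $ l)) *\<^sub>R u" by (rule posdef_inj[OF assms(2)])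
      have "x $ l = ((- (s * x $ l)) *\<^sub>R u) $ l" using xe by (rule arg_cong)
      then have xl: "x $ l = - (s * x $ l) * a" unfolding vector_scaleR_component real_scaleR_def a_def .
      have "x $ l * (1 + s * a) = 0" using xl by (simp only: algebra_simps)
      then have "x $ l = 0" using den by simp
      then have "- (s * x $ l) = 0" by simp
      then show "x = 0" using xe by (simp only: scaleR_zero_left)
    qed
    have invM: "invertible (diag_upd Omega l t)"
      unfolding invertible_left_inverse matrix_left_invertible_ker using injM by blast
    have Minv: "matrix_inv (diag_upd Omega l t) *v gamma = w"
      using inv_right[OF invM] Mw by (metis matrix_vector_mul_assoc matrix_vector_mul_lid)
    have gw: "gamma \<bullet> w = q - c * bl ^ 2"
      by (simp add: w_def inner_diff_right gu q_def power2_eq_square)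
    have "lambda_egmm (diag_upd Omega l t) gamma l = gamma $ l * (bl - c * bl * a) / (q - c * bl ^ 2)"
      by (simp add: lambda_egmm_def Minv wl gw)
    also have "\<dots> = g t"
    proof -
      have "bl - c * bl * a = bl / (1 + s * a)" using den by (simp add: c_def field_simps)
      moreover have "q - c * bl ^ 2 = (q * (1 + s * a) - s * bl ^ 2) / (1 + s * a)"
        using den by (simp add: c_def field_simps)
      ultimately show ?thesis using den by (simp add: g_def s_def[symmetric])
    qed
    finally show ?thesis by simp
  qed
  define D where "D = - (gamma $ l * bl) * (q * a - bl ^ 2) / q ^ 2"
  have Dg: "(g has_real_derivative D) (at t0)"
    unfolding g_def D_def by (rule deriv_aux[OF qpos])
  have "D < 0" unfolding D_def using Kpos CS qpos
    by (simp add: divide_neg_pos mult_pos_pos)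
  moreover have "((\<lambda>t. lambda_egmm (diag_upd Omega l t) gamma l) has_real_derivative D) (at (Omega $ l $ l))"
    using has_field_derivative_transform_within_open[OF Dg Sopen t0S eq] by (simp add: t0_def)
  ultimately show ?thesis by blast
qed

end
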